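(* Let $\Sigma$ be a finite alphabet. For every formula $\phi\in\mathbf{LTL}(\mathbf{F},\wedge)$ over $\Sigma$, either $\phi$ is equivalent to false (no nonempty word satisfies it), or there exist a finite set of non-repeating words $w_1,\dots,w_p\in\Sigma^*$ and $c\in\Sigma\cup\{\varepsilon\}$ such that for every nonempty word $z$: $z\models\phi$ if and only if every $w_q$ ($q\in[1,p]$) is a subword of $z$ and $z$ starts with $c$ (the latter condition being vacuous when $c=\varepsilon$).
   Context: Words are nonempty and indexed from position 1. $\mathbf{LTL}(\mathbf{F},\wedge)$: formulas built from atomic formulas $c\in\Sigma$, conjunction $\wedge$ and the eventually operator $\mathbf{F}$. Semantics on a word $w$ of length $\ell$ at position $i\in[1,\ell]$: $w,i\models c$ iff $w(i)=c$; $\wedge$ as usual; $w,i\models\mathbf{F}\phi$ iff $w,i'\models\phi$ for some $i'\in[i,\ell]$; $w\models\phi$ iff $w,1\models\phi$. A word $u=u(1)\cdots u(\ell')$ is a subword of $v=v(1)\cdots v(\ell)$ if there is a strictly increasing $f:[1,\ell']\to[1,\ell]$ with $v(f(i))=u(i)$ for all $i$ (scattered subsequence). A word is non-repeating if any two consecutive letters are different. *)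

theory Defs
  imports Main "HOL-Library.Sublist"
begin

datatype 'a ltl = Atom 'a | Conj "'a ltl" "'a ltl" | Ev "'a ltl"

text \<open>Words are lists; position i (1-indexed as in the paper) is w ! (i - 1).
  sat w i phi means w, i |= phi, meaningful for 1 <= i <= length w.\<close>
fun sat :: "'a list \<Rightarrow> nat \<Rightarrow> 'a ltl \<Rightarrow> bool" where
  "sat w i (Atom c) = (w ! (i - 1) = c)"
| "sat w i (Conj p q) = (sat w i p \<and> sat w i q)"
| "sat w i (Ev p) = (\<exists>i'. i \<le> i' \<and> i' \<le> length w \<and> sat w i' p)"

definition models :: "'a list \<Rightarrow> 'a ltl \<Rightarrow> bool" where
  "models w phi \<longleftrightarrow> sat w 1 phi"

definition subword :: "'a list \<Rightarrow> 'a list \<Rightarrow> bool" where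
  "subword u v \<longleftrightarrow> (\<exists>f. strict_mono_on {1..length u} f \<and>
      (\<forall>i\<in>{1..length u}. 1 \<le> f i \<and> f i \<le> length v \<and> v ! (f i - 1) = u ! (i - 1)))"

definition non_repeating :: "'a list \<Rightarrow> bool" where
  "non_repeating w \<longleftrightarrow> (\<forall>i. Suc i < length w \<longrightarrow> w ! i \<noteq> w ! Suc i)"

text \<open>c = None encodes epsilon (no condition); c = Some a means the word starts with a.\<close>
definition starts_with :: "'a option \<Rightarrow> 'a list \<Rightarrow> bool" where
  "starts_with c z \<longleftrightarrow> (case c of None \<Rightarrow> True | Some a \<Rightarrow> z \<noteq> [] \<and> hd z = a)"

end

theory Submission
  imports Defs
begin

fun satl :: "'a list \<Rightarrow> 'a ltl \<Rightarrow> bool" where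
  "satl z (Atom c) = (z \<noteq> [] \<and> hd z = c)"
| "satl z (Conj p q) = (satl z p \<and> satl z q)"
| "satl z (Ev p) = (\<exists>k<length z. satl (drop k z) p)"

lemma sat_satl: "1 \<le> i \<Longrightarrow> i \<le> length w \<Longrightarrow> sat w i phi = satl (drop (i - 1) w) phi"
proof (induction phi arbitrary: i)
  case (Atom x)
  have "i - 1 < length w" using Atom by linarith
  then show ?case by (simp add: hd_drop_conv_nth)
next
  case (Conj p q)
  then show ?case by simp
next
  case (Ev p)
  show ?case
  proof
    assume "sat w i (Ev p)"
    then obtain i' where "i \<le> i'" "i' \<le> length w" "sat w i' p" by auto
    with Ev have "satl (drop (i' - 1) w) p" by auto
    moreover have "drop (i' - 1) w = drop (i' - i) (drop (i - 1) w)"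
      using \<open>i \<le> i'\<close> Ev.prems by (simp add: add.commute)
    ultimately show "satl (drop (i - 1) w) (Ev p)"
      using \<open>i \<le> i'\<close> \<open>i' \<le> length w\<close> Ev.prems
      by (simp only: satl.simps) (rule exI[of _ "i' - i"], simp)
  next
    assume "satl (drop (i - 1) w) (Ev p)"
    then obtain k where k: "k < length w - (i - 1)" "satl (drop k (drop (i - 1) w)) p" by auto
    have "sat w (k + i) p" using Ev.IH[of "k+i"] k Ev.prems by (simp add: add.commute)
    moreover have "k + i \<le> length w" using k(1) Ev.prems by linarith
    ultimately show "sat w i (Ev p)" by (auto intro!: exI[of _ "k+i"])
  qed
qed

lemma models_satl: "z \<noteq> [] \<Longrightarrow> models z phi = satl z phi"
  unfolding models_def using sat_satl[of 1 z phi] by (cases z) auto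

lemma subseq_subword: "subseq u v \<Longrightarrow> subword u v"
proof (induction rule: list_emb.induct)
  case (list_emb_Nil ys)
  then show ?case by (simp add: subword_def)
next
  case (list_emb_Cons xs ys y)
  then obtain f where f: "strict_mono_on {1..length xs} f"
    "\<forall>i\<in>{1..length xs}. 1 \<le> f i \<and> f i \<le> length ys \<and> ys ! (f i - 1) = xs ! (i - 1)"
    by (auto simp: subword_def)
  show ?case unfolding subword_def
    apply (rule exI[of _ "\<lambda>i. Suc (f i)"])
    using f by (auto simp: strict_mono_on_def)
next
  case (list_emb_Cons2 x y xs ys)
  then obtain f where f: "strict_mono_on {1..length xs} f"
    "\<forall>i\<in>{1..length xs}. 1 \<le> f i \<and> f i \<le> length ys \<and> ys ! (f i - 1) = xs ! (i - 1)"
    by (auto simp: subword_def)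
  show ?case unfolding subword_def
  proof (rule exI[of _ "\<lambda>i. if i = 1 then 1 else Suc (f (i - 1))"], rule conjI, rule_tac [2] ballI)
    show "strict_mono_on {1..length (x # xs)} (\<lambda>i. if i = 1 then 1 else Suc (f (i - 1)))"
      unfolding strict_mono_on_def
    proof (intro allI impI)
      fix r s assume a: "r \<in> {1..length (x # xs)} \<and> s \<in> {1..length (x # xs)} \<and> r < s"
      show "(if r = 1 then 1 else Suc (f (r - 1))) < (if s = 1 then 1 else Suc (f (s - 1)))"
      proof (cases "r = 1")
        case True
        have m: "s - 1 \<in> {1..length xs}" using a True by auto
        have "1 \<le> f (s - 1)" using f(2) m by blast
        then show ?thesis using a True by auto
      next
        case False
        have "r - 1 \<in> {1..length xs}" "s - 1 \<in> {1..length xs}" "r - 1 < s - 1" using a False by auto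
        then have "f (r - 1) < f (s - 1)" using f(1) unfolding strict_mono_on_def by blast
        then show ?thesis using a False by auto

      qed
    qed
  next
    fix i assume i: "i \<in> {1..length (x # xs)}"
    show "1 \<le> (if i = 1 then 1 else Suc (f (i - 1))) \<and>
       (if i = 1 then 1 else Suc (f (i - 1))) \<le> length (y # ys) \<and>
       (y # ys) ! ((if i = 1 then 1 else Suc (f (i - 1))) - 1) = (x # xs) ! (i - 1)"
    proof (cases "i = 1")
      case True then show ?thesis using list_emb_Cons2 by simp
    next
      case False
      then have m: "i - 1 \<in> {1..length xs}" using i by auto
      then have h: "1 \<le> f (i - 1)" "f (i - 1) \<le> length ys" "ys ! (f (i - 1) - 1) = xs ! (i - 1 - 1)"
        using f(2) by blast+
      have "(y # ys) ! f (i - 1) = ys ! (f (i - 1) - 1)" using h(1) by (simp add: nth_Cons')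
      moreover have "(x # xs) ! (i - 1) = xs ! (i - 1 - 1)"
      proof -
        have "i - 1 = Suc (i - 1 - 1)" using m by auto
        then show ?thesis by (metis nth_Cons_Suc)
      qed
      ultimately show ?thesis using h False by simp
    qed
  qed
qed

lemma subseq_drop: "subseq (drop k z) z"
proof -
  have "subseq (drop k z) (take k z @ drop k z)" by (rule subseq_drop_many) simp
  then show ?thesis by simp
qed

lemma subword_subseq: "subword u v \<Longrightarrow> subseq u v"
proof (induction u arbitrary: v)
  case Nil
  then show ?case by simp
next
  case (Cons x xs)
  then obtain f where f: "strict_mono_on {1..length (x#xs)} f"
    "\<forall>i\<in>{1..length (x#xs)}. 1 \<le> f i \<and> f i \<le> length v \<and> v ! (f i - 1) = (x#xs) ! (i - 1)"
    by (auto simp: subword_def)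
  define j where "j = f 1"
  have j: "1 \<le> j" "j \<le> length v" "v ! (j - 1) = x" using f(2) j_def by auto
  have gt: "f (Suc i) > j" if "i \<in> {1..length xs}" for i
    using f(1) that unfolding strict_mono_on_def j_def by auto
  have "subword xs (drop j v)" unfolding subword_def
  proof (rule exI[of _ "\<lambda>i. f (Suc i) - j"], rule conjI, rule_tac [2] ballI)
    show "strict_mono_on {1..length xs} (\<lambda>i. f (Suc i) - j)"
      unfolding strict_mono_on_def
    proof (intro allI impI)
      fix r s assume a: "r \<in> {1..length xs} \<and> s \<in> {1..length xs} \<and> r < s"
      then have "f (Suc r) < f (Suc s)" using f(1) unfolding strict_mono_on_def by auto
      then show "f (Suc r) - j < f (Suc s) - j" using gt[of r] a by auto
    qed
  next
    fix i assume i: "i \<in> {1..length xs}"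
    have si: "Suc i \<in> {1..length (x#xs)}" using i by auto
    have g: "f (Suc i) > j" using gt i .
    have "v ! (f (Suc i) - 1) = xs ! (i - 1)" using f(2) si i by (cases i) auto
    moreover have "drop j v ! (f (Suc i) - j - 1) = v ! (f (Suc i) - 1)"
      using g j f(2) si by (subst nth_drop) (auto simp: algebra_simps)
    moreover have "f (Suc i) \<le> length v" using f(2) si by blast
    ultimately show "1 \<le> f (Suc i) - j \<and> f (Suc i) - j \<le> length (drop j v) \<and>
         drop j v ! (f (Suc i) - j - 1) = xs ! (i - 1)"
      using g by auto
  qed
  then have "subseq xs (drop j v)" by (rule Cons.IH)
  moreover have "drop (j - 1) v = x # drop j v"
    using j by (metis Cons_nth_drop_Suc Suc_diff_1 Suc_le_lessD less_eq_Suc_le zero_less_one le_trans)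
  ultimately have "subseq (x#xs) (drop (j - 1) v)" by simp
  then show ?case using subseq_drop subseq_order.trans by blast
qed

lemma subword_iff: "subword u v = subseq u v"
  using subword_subseq subseq_subword by blast

definition NF :: "'a list set \<Rightarrow> 'a option \<Rightarrow> 'a ltl \<Rightarrow> bool" where
  "NF W c phi \<longleftrightarrow> finite W \<and> (\<forall>w\<in>W. non_repeating w) \<and>
     (\<forall>z. z \<noteq> [] \<longrightarrow> (satl z phi \<longleftrightarrow> (\<forall>w\<in>W. subseq w z) \<and> starts_with c z))"

definition cons' :: "'a \<Rightarrow> 'a list \<Rightarrow> 'a list" where
  "cons' a w = (if w \<noteq> [] \<and> hd w = a then w else a # w)"

lemma nonrep_cons': "non_repeating w \<Longrightarrow> non_repeating (cons' a w)"
  unfolding cons'_def non_repeating_def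
  by (auto simp: nth_Cons split: nat.splits) (metis hd_conv_nth list.size(3) not_less0)

lemma subseq_skip: "subseq (x#xs) (y#ys) \<Longrightarrow> x \<noteq> y \<Longrightarrow> subseq (x#xs) ys"
  by (erule list_emb.cases) auto

lemma subseq_dropWhile: "subseq (a#u) z \<Longrightarrow> subseq (a#u) (dropWhile (\<lambda>x. x \<noteq> a) z)"
proof (induction z)
  case Nil then show ?case by simp
next
  case (Cons y ys)
  show ?case
  proof (cases "y = a")
    case True then show ?thesis using Cons by simp
  next
    case False then show ?thesis using Cons subseq_skip[of a u y ys] by auto
  qed
qed

lemma ev_some:
  assumes "NF W (Some a) p"
  shows "NF (insert [a] (cons' a ` W)) None (Ev p)"
  unfolding NF_def
proof (intro conjI allI impI)
  show "finite (insert [a] (cons' a ` W))" using assms by (simp add: NF_def)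
  show "\<forall>w\<in>insert [a] (cons' a ` W). non_repeating w"
  proof
    fix w assume "w \<in> insert [a] (cons' a ` W)"
    then show "non_repeating w"
    proof
      assume "w = [a]" then show ?thesis by (simp add: non_repeating_def)
    next
      assume "w \<in> cons' a ` W" then show ?thesis using assms by (auto simp: NF_def intro!: nonrep_cons')
    qed
  qed
  fix z :: "'a list" assume z: "z \<noteq> []"
  have sem: "\<And>s. s \<noteq> [] \<Longrightarrow> satl s p = ((\<forall>w\<in>W. subseq w s) \<and> s \<noteq> [] \<and> hd s = a)"
    using assms by (auto simp: NF_def starts_with_def)
  show "satl z (Ev p) = ((\<forall>w\<in>insert [a] (cons' a ` W). subseq w z) \<and> starts_with None z)"
  proof
    assume "satl z (Ev p)"
    then obtain k where k: "k < length z" "satl (drop k z) p" by auto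
    have ne: "drop k z \<noteq> []" using k by simp
    with sem k have W: "\<forall>w\<in>W. subseq w (drop k z)" and h: "hd (drop k z) = a" by auto
    have "z ! k = a" using h k by (simp add: hd_drop_conv_nth)
    then have dz: "drop k z = a # drop (Suc k) z" using Cons_nth_drop_Suc[OF k(1)] by simp
    have "subseq [a] (drop k z)" using dz by simp
    then have "subseq [a] z" by (rule subseq_order.trans[OF _ subseq_drop])
    moreover have "subseq (cons' a w) z" if w: "w \<in> W" for w
    proof (cases "w \<noteq> [] \<and> hd w = a")
      case True
      have "subseq w (drop k z)" using W w by blast
      then have "subseq w z" by (rule subseq_order.trans[OF _ subseq_drop])
      then show ?thesis using True by (simp add: cons'_def)
    next
      case False
      have "subseq w (drop (Suc k) z)"
      proof (cases w)
        case Nil then show ?thesis by simp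
      next
        case (Cons x xs)
        have "subseq w (drop k z)" using W w by blast
        then have s1: "subseq (x#xs) (a # drop (Suc k) z)" using Cons dz by simp
        have "x \<noteq> a" using False Cons by simp
        then show ?thesis using subseq_skip[OF s1] Cons by simp
      qed
      then have "subseq (a#w) (drop k z)" using dz by simp
      then have "subseq (a#w) z" by (rule subseq_order.trans[OF _ subseq_drop])
      then show ?thesis using False by (auto simp: cons'_def)
    qed
    ultimately have "\<forall>w\<in>insert [a] (cons' a ` W). subseq w z" by blast
    then show "(\<forall>w\<in>insert [a] (cons' a ` W). subseq w z) \<and> starts_with None z"
      by (simp add: starts_with_def)
  next
    assume r: "(\<forall>w\<in>insert [a] (cons' a ` W). subseq w z) \<and> starts_with None z"
    define k where "k = length (takeWhile (\<lambda>x. x \<noteq> a) z)"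
    have "subseq [a] z" using r by blast
    then have "a \<in> set z" by (simp add: subseq_singleton_left)
    have dk: "drop k z = dropWhile (\<lambda>x. x \<noteq> a) z" by (simp add: k_def dropWhile_eq_drop)
    have dne: "dropWhile (\<lambda>x. x \<noteq> a) z \<noteq> []" using \<open>a \<in> set z\<close> by (simp add: dropWhile_eq_Nil_conv)
    then have ne: "drop k z \<noteq> []" unfolding dk .
    then have k: "k < length z" by simp
    have "hd (dropWhile (\<lambda>x. x \<noteq> a) z) = a" using hd_dropWhile[OF dne] by simp
    then have h: "hd (drop k z) = a" unfolding dk .
    have "subseq w (drop k z)" if w: "w \<in> W" for w
    proof (cases "w \<noteq> [] \<and> hd w = a")
      case True
      then obtain u where u: "w = a # u" by (metis list.collapse)
      have "subseq (cons' a w) z" using r w by blast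
      then have "subseq w z" using True unfolding cons'_def by simp
      then show ?thesis unfolding dk u by (rule subseq_dropWhile)
    next
      case False
      have "subseq (cons' a w) z" using r w by blast
      then have "subseq (a#w) z" using False unfolding cons'_def by simp
      then have "subseq (a#w) (drop k z)" unfolding dk by (rule subseq_dropWhile)
      then show ?thesis by (rule subseq_Cons')
    qed
    then have "\<forall>w\<in>W. subseq w (drop k z)" by blast
    then have "satl (drop k z) p" using sem[OF ne] h ne by simp
    then show "satl z (Ev p)" unfolding satl.simps using k by blast
  qed
qed

lemma ev_none:
  assumes "NF W None p"
  shows "NF W None (Ev p)"
  unfolding NF_def
proof (intro conjI allI impI)
  show "finite W" "\<forall>w\<in>W. non_repeating w" using assms by (auto simp: NF_def)
  fix z :: "'a list" assume z: "z \<noteq> []"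
  have sem: "\<And>s. s \<noteq> [] \<Longrightarrow> satl s p = (\<forall>w\<in>W. subseq w s)"
    using assms by (auto simp: NF_def starts_with_def)
  show "satl z (Ev p) = ((\<forall>w\<in>W. subseq w z) \<and> starts_with None z)"
  proof
    assume "satl z (Ev p)"
    then obtain k where k: "k < length z" "satl (drop k z) p" by auto
    then have "\<forall>w\<in>W. subseq w (drop k z)" using sem by auto
    then have "\<forall>w\<in>W. subseq w z" using subseq_order.trans[OF _ subseq_drop] by blast
    then show "(\<forall>w\<in>W. subseq w z) \<and> starts_with None z" by (simp add: starts_with_def)
  next
    assume "(\<forall>w\<in>W. subseq w z) \<and> starts_with None z"
    then have "satl (drop 0 z) p" using sem z by simp
    then show "satl z (Ev p)" using z by auto
  qed
qed

lemma main: "(\<forall>z. z \<noteq> [] \<longrightarrow> \<not> satl z phi) \<or> (\<exists>W c. NF W c phi)"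
proof (induction phi)
  case (Atom a)
  have "NF {} (Some a) (Atom a)" by (auto simp: NF_def starts_with_def)
  then show ?case by blast
next
  case (Conj p q)
  show ?case
  proof (cases "(\<forall>z. z \<noteq> [] \<longrightarrow> \<not> satl z p) \<or> (\<forall>z. z \<noteq> [] \<longrightarrow> \<not> satl z q)")
    case True then show ?thesis by auto
  next
    case False
    then obtain W1 c1 W2 c2 where n1: "NF W1 c1 p" and n2: "NF W2 c2 q" using Conj by blast
    show ?thesis
    proof (cases "\<exists>a b. c1 = Some a \<and> c2 = Some b \<and> a \<noteq> b")
      case True
      then obtain a b where ab: "c1 = Some a" "c2 = Some b" "a \<noteq> b" by blast
      have "\<not> satl z (Conj p q)" if z: "z \<noteq> []" for z
      proof
        assume "satl z (Conj p q)"
        then have "satl z p" "satl z q" by auto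
        then have "starts_with c1 z" "starts_with c2 z" using n1 n2 z unfolding NF_def by blast+
        then show False using ab by (simp add: starts_with_def)
      qed
      then show ?thesis by blast
    next
      case False
      define c where "c = (case c1 of None \<Rightarrow> c2 | Some a \<Rightarrow> c1)"
      have sc: "\<And>z. starts_with c z = (starts_with c1 z \<and> starts_with c2 z)"
        using False unfolding c_def starts_with_def by (auto split: option.splits)
      have "NF (W1 \<union> W2) c (Conj p q)"
        unfolding NF_def
      proof (intro conjI allI impI)
        show "finite (W1 \<union> W2)" using n1 n2 unfolding NF_def by blast
        show "\<forall>w\<in>W1 \<union> W2. non_repeating w" using n1 n2 unfolding NF_def by blast
        fix z :: "'a list" assume z: "z \<noteq> []"
        have e1: "satl z p = ((\<forall>w\<in>W1. subseq w z) \<and> starts_with c1 z)" using n1 z unfolding NF_def by blast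
        have e2: "satl z q = ((\<forall>w\<in>W2. subseq w z) \<and> starts_with c2 z)" using n2 z unfolding NF_def by blast
        show "satl z (Conj p q) = ((\<forall>w\<in>W1 \<union> W2. subseq w z) \<and> starts_with c z)"
          unfolding satl.simps e1 e2 sc by blast
      qed
      then show ?thesis by blast
    qed
  qed
next
  case (Ev p)
  show ?case
  proof (cases "\<forall>z. z \<noteq> [] \<longrightarrow> \<not> satl z p")
    case True
    then have "\<forall>z. z \<noteq> [] \<longrightarrow> \<not> satl z (Ev p)" by auto
    then show ?thesis by blast
  next
    case False
    then obtain W c where n: "NF W c p" using Ev by blast
    show ?thesis
    proof (cases c)
      case None then show ?thesis using ev_none n by blast
    next
      case (Some a)
      have "NF (insert [a] (cons' a ` W)) None (Ev p)" using ev_some n Some by simp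
      then show ?thesis by blast
    qed
  qed
qed

theorem lemma2:
  fixes phi :: "'a::finite ltl"
  shows "(\<forall>z. z \<noteq> [] \<longrightarrow> \<not> models z phi) \<or>
         (\<exists>W :: 'a list set. \<exists>c :: 'a option. finite W \<and> (\<forall>w\<in>W. non_repeating w) \<and>
            (\<forall>z. z \<noteq> [] \<longrightarrow> (models z phi \<longleftrightarrow> (\<forall>w\<in>W. subword w z) \<and> starts_with c z)))"
  using main[of phi] unfolding NF_def by (simp add: models_satl subword_iff)

end
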